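(* Let $\mathcal A_+,\mathcal A_-\subseteq\mathbb R^n$ be disjoint finite sets such that $\mathcal A=\mathcal A_+\cup\mathcal A_-$ is full dimensional and $(\mathcal A_+,\mathcal A_-)$ is nonseparable, and fix $D\in\mathcal F_n(\mathcal A_+)$ with $\mathcal A_-\subseteq D$; let $r=\#\Lambda(\mathcal A_+,D)$. Let $f\in\mathcal S(\mathcal A_+,\mathcal A_-)$ have nonsigned coefficients $c\in\mathbb R^{\mathcal A}_{>0}$ with $\mathbb 1\in\operatorname{Sing}_{>0}(f)$. Then $\mathcal Z(\Lambda(\mathcal A_+,D),c)\cap\mathbb R^r_{\ge0}\neq\varnothing$.
   Context: A signomial with signed support $(\mathcal A_+,\mathcal A_-)$ is $f(x)=\sum_{a\in\mathcal A_+}c_ax^a-\sum_{b\in\mathcal A_-}c_bx^b$ on $\mathbb R^n_{>0}$ with all $c_a,c_b>0$; $\mathcal S(\mathcal A_+,\mathcal A_-)$ is the set of these. Full dimensional: $\dim\operatorname{conv}(\mathcal A)=n$. $\operatorname{Sing}_{>0}(f)$ is the set of $x\in\mathbb R^n_{>0}$ with $f(x)=x_1\partial_{x_1}f(x)=\dots=x_n\partial_{x_n}f(x)=0$; $\mathbb 1=(1,\dots,1)$. $\mathcal F(\mathcal A_+)$ is the common refinement of all regular polyhedral subdivisions of $\mathcal A_+$, $\mathcal F_n(\mathcal A_+)$ its $n$-dimensional cells; $(\mathcal A_+,\mathcal A_-)$ is nonseparable if $\mathcal A_-\subseteq\operatorname{relint}\operatorname{conv}(\mathcal A_+)$ and some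 $D\in\mathcal F_n(\mathcal A_+)$ contains $\mathcal A_-$. $\Lambda(\mathcal A_+,D)=\{\Delta_1,\dots,\Delta_r\}$ is the set of $n$-simplices with vertices in $\mathcal A_+$ with $\operatorname{relint}(D)\subseteq\operatorname{relint}(\Delta)$. With $\lambda^b_{a,k}$ the barycentric coordinates of $b\in\mathcal A_-$ w.r.t. the vertices of $\Delta_k$, $\mathcal Z(\Lambda,c)\subseteq\mathbb R^r$ is the solution set of $c_a=\sum_{k:\,a\in\operatorname{vertices}(\Delta_k)}\delta_k\big(\sum_{b\in\mathcal A_-}\lambda^b_{a,k}c_b\big)$, $a\in\mathcal A_+$, in the unknowns $\delta_1,\dots,\delta_r$. *)

theory Defs
  imports "HOL-Analysis.Analysis"
begin

definition mono_pow :: "real^'n \<Rightarrow> real^'n \<Rightarrow> real" where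
  "mono_pow x a = (\<Prod>i\<in>UNIV. (x$i) powr (a$i))"

definition signomial :: "(real^'n) set \<Rightarrow> (real^'n) set \<Rightarrow> (real^'n \<Rightarrow> real) \<Rightarrow> real^'n \<Rightarrow> real" where
  "signomial Ap Am c x = (\<Sum>a\<in>Ap. c a * mono_pow x a) - (\<Sum>b\<in>Am. c b * mono_pow x b)"

definition Sing_pos :: "(real^'n \<Rightarrow> real) \<Rightarrow> (real^'n) set" where
  "Sing_pos f = {x. (\<forall>i. x$i > 0) \<and> f x = 0 \<and>
     (\<forall>i. \<exists>d. ((\<lambda>t. f (x + t *\<^sub>R axis i 1)) has_real_derivative d) (at 0) \<and> x$i * d = 0)}"

text \<open>Cells of the regular polyhedral subdivision of A induced by the height function h:
  projections of the lower faces, i.e. convex hulls of the sets of minimisers of h a + w . a.\<close>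
definition reg_cells :: "(real^'n) set \<Rightarrow> (real^'n \<Rightarrow> real) \<Rightarrow> (real^'n) set set" where
  "reg_cells A h = {convex hull {a\<in>A. \<forall>a'\<in>A. h a + w \<bullet> a \<le> h a' + w \<bullet> a'} | w. True}"

text \<open>Cells of the common refinement F(A) of all regular subdivisions of A:
  nonempty intersections of one cell chosen from each regular subdivision.\<close>
definition common_refinement :: "(real^'n) set \<Rightarrow> (real^'n) set set" where
  "common_refinement A = {C. C \<noteq> {} \<and>
     (\<exists>\<sigma>. (\<forall>h. \<sigma> h \<in> reg_cells A h) \<and> C = (\<Inter>h. \<sigma> h))}"

definition F_n :: "(real^'n) set \<Rightarrow> (real^'n) set set" where
  "F_n A = {C \<in> common_refinement A. aff_dim C = int CARD('n)}"

definition nonseparable :: "(real^'n) set \<Rightarrow> (real^'n) set \<Rightarrow> bool" where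
  "nonseparable Ap Am \<longleftrightarrow> Am \<subseteq> rel_interior (convex hull Ap) \<and> (\<exists>D\<in>F_n Ap. Am \<subseteq> D)"

text \<open>Lambda(A,D): n-simplices with vertices in A (represented by their vertex sets)
  whose relative interior contains that of D.\<close>
definition Lambda :: "(real^'n) set \<Rightarrow> (real^'n) set \<Rightarrow> (real^'n) set set" where
  "Lambda A D = {V. V \<subseteq> A \<and> card V = CARD('n) + 1 \<and> \<not> affine_dependent V \<and>
      rel_interior D \<subseteq> rel_interior (convex hull V)}"

definition bary :: "(real^'n) set \<Rightarrow> real^'n \<Rightarrow> real^'n \<Rightarrow> real" where
  "bary V b a = (THE \<mu>. (\<forall>v. v \<notin> V \<longrightarrow> \<mu> v = 0) \<and> sum \<mu> V = 1 \<and>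
      (\<Sum>v\<in>V. \<mu> v *\<^sub>R v) = b) a"

text \<open>Z(Lambda,c), with R^r identified with R^Lambda (delta indexed by the simplices).\<close>
definition Zset :: "(real^'n) set \<Rightarrow> (real^'n) set \<Rightarrow> (real^'n) set set \<Rightarrow> (real^'n \<Rightarrow> real)
    \<Rightarrow> ((real^'n) set \<Rightarrow> real) set" where
  "Zset Ap Am L c = {\<delta>. (\<forall>V. V \<notin> L \<longrightarrow> \<delta> V = 0) \<and>
     (\<forall>a\<in>Ap. c a = (\<Sum>V\<in>{V\<in>L. a \<in> V}. \<delta> V * (\<Sum>b\<in>Am. bary V b a * c b)))}"

end

theory Submission
  imports Defs
begin


definition dotA :: "'i set \<Rightarrow> ('i \<Rightarrow> real) \<Rightarrow> ('i \<Rightarrow> real) \<Rightarrow> real" where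
  "dotA A u v = (\<Sum>a\<in>A. u a * v a)"

lemma dotA_lin2: "dotA A y (\<lambda>a. u a - k * v a) = dotA A y u - k * dotA A y v"
  unfolding dotA_def by (simp add: algebra_simps sum_subtractf sum_distrib_left)

lemma dotA_lin1: "dotA A (\<lambda>a. u a - k * v a) w = dotA A u w - k * dotA A v w"
  unfolding dotA_def by (simp add: algebra_simps sum_subtractf sum_distrib_left)

lemma dotA_comm: "dotA A u v = dotA A v u"
  unfolding dotA_def by (simp add: mult.commute)

lemma farkas_aux:
  assumes "finite A" "finite I"
  and "\<not>(\<exists>l. (\<forall>i\<in>I. l i \<ge> 0) \<and> (\<forall>a\<in>A. b a = (\<Sum>i\<in>I. l i * g i a)))"
  shows "\<exists>y. (\<forall>i\<in>I. dotA A y (g i) \<ge> 0) \<and> dotA A y b < 0"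
  using assms(2,3)
proof (induction I arbitrary: g b rule: finite_induct)
  case empty
  then obtain a where a: "a \<in> A" "b a \<noteq> 0" by auto
  have "0 < (\<Sum>a\<in>A. b a * b a)"
    by (rule sum_pos2[OF assms(1) a(1)]) (use a in \<open>auto simp: zero_less_mult_iff linorder_neq_iff\<close>)
  then have "dotA A (\<lambda>a. - b a) b < 0"
    unfolding dotA_def by (simp add: sum_negf)
  then show ?case by auto
next
  case (insert j I)
  have notI: "\<not>(\<exists>l. (\<forall>i\<in>I. l i \<ge> 0) \<and> (\<forall>a\<in>A. b a = (\<Sum>i\<in>I. l i * g i a)))"
  proof
    assume "\<exists>l. (\<forall>i\<in>I. l i \<ge> 0) \<and> (\<forall>a\<in>A. b a = (\<Sum>i\<in>I. l i * g i a))"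
    then obtain l where l: "\<forall>i\<in>I. l i \<ge> 0" "\<forall>a\<in>A. b a = (\<Sum>i\<in>I. l i * g i a)" by blast
    have "\<forall>i\<in>insert j I. (l(j:=0)) i \<ge> 0" using l by auto
    moreover have "\<forall>a\<in>A. b a = (\<Sum>i\<in>insert j I. (l(j:=0)) i * g i a)"
    proof
      fix a assume "a \<in> A"
      have "(\<Sum>i\<in>I. (l(j:=0)) i * g i a) = (\<Sum>i\<in>I. l i * g i a)"
        by (rule sum.cong) (use insert.hyps in auto)
      then show "b a = (\<Sum>i\<in>insert j I. (l(j:=0)) i * g i a)"
        using l \<open>a\<in>A\<close> insert.hyps by simp
    qed
    ultimately show False using insert.prems by blast
  qed
  from insert.IH[OF notI] obtain y where y: "\<forall>i\<in>I. dotA A y (g i) \<ge> 0" "dotA A y b < 0" by blast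
  show ?case
  proof (cases "dotA A y (g j) \<ge> 0")
    case True then show ?thesis using y by auto
  next
    case False
    define t where "t = dotA A y (g j)"
    have t: "t < 0" using False t_def by simp
    define g' where "g' i = (\<lambda>a. g i a - dotA A y (g i) / t * g j a)" for i
    define b' where "b' = (\<lambda>a. b a - dotA A y b / t * g j a)"
    have notI': "\<not>(\<exists>l. (\<forall>i\<in>I. l i \<ge> 0) \<and> (\<forall>a\<in>A. b' a = (\<Sum>i\<in>I. l i * g' i a)))"
    proof
      assume "\<exists>l. (\<forall>i\<in>I. l i \<ge> 0) \<and> (\<forall>a\<in>A. b' a = (\<Sum>i\<in>I. l i * g' i a))"
      then obtain l where l: "\<forall>i\<in>I. l i \<ge> 0" "\<forall>a\<in>A. b' a = (\<Sum>i\<in>I. l i * g' i a)" by blast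
      define lj where "lj = (dotA A y b - (\<Sum>i\<in>I. l i * dotA A y (g i))) / t"
      have "(\<Sum>i\<in>I. l i * dotA A y (g i)) \<ge> 0" using l y by (auto intro: sum_nonneg)
      then have "dotA A y b - (\<Sum>i\<in>I. l i * dotA A y (g i)) < 0" using y by linarith
      then have lj0: "lj \<ge> 0" unfolding lj_def using t by (simp add: divide_nonpos_neg less_imp_le)
      have "\<forall>i\<in>insert j I. (l(j:=lj)) i \<ge> 0" using l lj0 by auto
      moreover have "\<forall>a\<in>A. b a = (\<Sum>i\<in>insert j I. (l(j:=lj)) i * g i a)"
      proof
        fix a assume a: "a \<in> A"
        have s1: "(\<Sum>i\<in>I. (l(j:=lj)) i * g i a) = (\<Sum>i\<in>I. l i * g i a)"
          by (rule sum.cong) (use insert.hyps in auto)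
        have "b' a = (\<Sum>i\<in>I. l i * g' i a)" using l a by blast
        also have "\<dots> = (\<Sum>i\<in>I. l i * g i a) - (\<Sum>i\<in>I. l i * dotA A y (g i)) / t * g j a"
          unfolding g'_def by (simp add: algebra_simps sum_subtractf sum_distrib_left sum_divide_distrib sum_distrib_right)
        finally have "b a = (\<Sum>i\<in>I. l i * g i a) + lj * g j a"
          unfolding b'_def lj_def using t by (simp add: field_simps)
        then show "b a = (\<Sum>i\<in>insert j I. (l(j:=lj)) i * g i a)"
          using s1 insert.hyps by simp
      qed
      ultimately show False using insert.prems by blast
    qed
    from insert.IH[OF notI'] obtain y' where y': "\<forall>i\<in>I. dotA A y' (g' i) \<ge> 0" "dotA A y' b' < 0" by blast
    define s where "s = dotA A y' (g j)"
    define yh where "yh = (\<lambda>a. y' a - s / t * y a)"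
    have "dotA A yh (g j) = 0"
      unfolding yh_def dotA_lin1 s_def t_def[symmetric] using t by simp
    moreover have "\<forall>i\<in>I. dotA A yh (g i) \<ge> 0"
    proof
      fix i assume "i \<in> I"
      have "dotA A yh (g i) = dotA A y' (g' i)"
        unfolding yh_def g'_def dotA_lin1 dotA_lin2 s_def by simp
      then show "dotA A yh (g i) \<ge> 0" using y' \<open>i\<in>I\<close> by simp
    qed
    moreover have "dotA A yh b = dotA A y' b'"
      unfolding yh_def b'_def dotA_lin1 dotA_lin2 s_def by simp
    ultimately show ?thesis using y' by (intro exI[of _ yh]) auto
  qed
qed



lemma mono_pow_one: "mono_pow (1::real^'n) a = 1"
  unfolding mono_pow_def by simp

lemma mono_pow_line: "mono_pow ((1::real^'n) + t *\<^sub>R axis i 1) a = (1 + t) powr (a$i)"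
proof -
  have "mono_pow ((1::real^'n) + t *\<^sub>R axis i 1) a = (\<Prod>j\<in>UNIV. if j = i then (1+t) powr (a$i) else 1)"
    unfolding mono_pow_def by (rule prod.cong) (auto simp: axis_def)
  then show ?thesis by simp
qed

lemma deriv_line: "((\<lambda>t. (1 + t) powr (r::real)) has_real_derivative r) (at 0)"
proof -
  have "((\<lambda>t. (1 + t) powr r) has_real_derivative (r * (1 + 0) powr (r - 1)) * 1) (at 0)"
    by (rule DERIV_chain2[OF has_real_derivative_powr]) (auto intro!: derivative_eq_intros)
  then show ?thesis by simp
qed

lemma sing_facts:
  fixes Ap Am :: "(real^'n) set" and c :: "real^'n \<Rightarrow> real"
  assumes "(1::real^'n) \<in> Sing_pos (signomial Ap Am c)"
  shows "(\<Sum>a\<in>Ap. c a) = (\<Sum>b\<in>Am. c b)"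
    and "(\<Sum>a\<in>Ap. c a *\<^sub>R a) = (\<Sum>b\<in>Am. c b *\<^sub>R b)"
proof -
  show "(\<Sum>a\<in>Ap. c a) = (\<Sum>b\<in>Am. c b)"
    using assms unfolding Sing_pos_def signomial_def by (simp add: mono_pow_one)
  show "(\<Sum>a\<in>Ap. c a *\<^sub>R a) = (\<Sum>b\<in>Am. c b *\<^sub>R b)"
  proof (subst vec_eq_iff, intro allI)
    fix i
    from assms obtain d where d: "((\<lambda>t. signomial Ap Am c (1 + t *\<^sub>R axis i 1)) has_real_derivative d) (at 0)"
      "(1::real^'n)$i * d = 0"
      unfolding Sing_pos_def by blast
    have eq: "(\<lambda>t. signomial Ap Am c (1 + t *\<^sub>R axis i 1)) =
       (\<lambda>t. (\<Sum>a\<in>Ap. c a * (1 + t) powr (a$i)) - (\<Sum>b\<in>Am. c b * (1 + t) powr (b$i)))"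
      unfolding signomial_def by (simp add: mono_pow_line)
    have "((\<lambda>t. (\<Sum>a\<in>Ap. c a * (1 + t) powr (a$i)) - (\<Sum>b\<in>Am. c b * (1 + t) powr (b$i)))
        has_real_derivative (\<Sum>a\<in>Ap. c a * a$i) - (\<Sum>b\<in>Am. c b * b$i)) (at 0)"
      by (rule DERIV_diff; rule DERIV_sum; rule DERIV_cmult; rule deriv_line)
    then have "d = (\<Sum>a\<in>Ap. c a * a$i) - (\<Sum>b\<in>Am. c b * b$i)"
      by (rule DERIV_unique[OF d(1)[unfolded eq]])
    with d(2) show "(\<Sum>a\<in>Ap. c a *\<^sub>R a) $ i = (\<Sum>b\<in>Am. c b *\<^sub>R b) $ i" by simp
  qed
qed



lemma bary_char:
  fixes V :: "(real^'n) set"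
  assumes ind: "\<not> affine_dependent V" and fin: "finite V" and aff: "affine hull V = UNIV"
  shows "(\<forall>v. v \<notin> V \<longrightarrow> bary V b v = 0) \<and> sum (bary V b) V = 1 \<and> (\<Sum>v\<in>V. bary V b v *\<^sub>R v) = b"
proof -
  let ?P = "\<lambda>\<mu>. (\<forall>v. v \<notin> V \<longrightarrow> \<mu> v = 0) \<and> sum \<mu> V = 1 \<and> (\<Sum>v\<in>V. \<mu> v *\<^sub>R v) = b"
  have "b \<in> affine hull V" using aff by simp
  then obtain u where u: "sum u V = 1" "(\<Sum>v\<in>V. u v *\<^sub>R v) = b"
    using affine_hull_finite[OF fin] by auto
  define \<mu>0 where "\<mu>0 = (\<lambda>v. if v \<in> V then u v else 0)"
  have P0: "?P \<mu>0" using u unfolding \<mu>0_def by (auto intro!: sum.cong)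
  have uniq: "\<mu>1 = \<mu>0" if "?P \<mu>1" for \<mu>1
  proof
    fix v
    define U where "U = (\<lambda>v. \<mu>1 v - \<mu>0 v)"
    have "sum U V = 0" using that P0 unfolding U_def by (simp add: sum_subtractf)
    moreover have "(\<Sum>v\<in>V. U v *\<^sub>R v) = 0"
      using that P0 unfolding U_def by (simp add: scaleR_left_diff_distrib sum_subtractf)
    ultimately have "\<forall>v\<in>V. U v = 0"
      using ind affine_dependent_explicit_finite[OF fin] by blast
    then show "\<mu>1 v = \<mu>0 v" using that P0 unfolding U_def by (cases "v \<in> V") auto
  qed
  have "(THE \<mu>. ?P \<mu>) = \<mu>0" using P0 uniq by (rule the_equality)
  then have "bary V b = \<mu>0" unfolding bary_def[abs_def] by (simp add: fun_eq_iff)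
  then show ?thesis using P0 by simp
qed

lemma interior_Union_empty:
  fixes K :: "('a::real_normed_vector) set set"
  assumes "finite K" "\<forall>S\<in>K. closed S \<and> interior S = {}"
  shows "interior (\<Union>K) = {}"
  using assms
proof (induction K rule: finite_induct)
  case empty then show ?case by simp
next
  case (insert S K)
  then have "interior (S \<union> \<Union>K) = interior S"
    by (intro interior_closed_Un_empty_interior) auto
  then show ?case using insert by simp
qed

lemma geo:
  fixes Ap D :: "(real^'n) set" and y :: "real^'n \<Rightarrow> real"
  assumes finAp: "finite Ap" and DF: "D \<in> F_n Ap"
  shows "\<exists>V\<in>Lambda Ap D. \<exists>w m. (\<forall>v\<in>V. y v + w \<bullet> v = m) \<and> (\<forall>a\<in>Ap. y a + w \<bullet> a \<ge> m)"
proof -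
  let ?n = "CARD('n)"
  from DF have DC: "D \<in> common_refinement Ap" and affD: "aff_dim D = int ?n"
    unfolding F_n_def by auto
  from DC obtain \<sigma> where \<sigma>: "\<forall>h. \<sigma> h \<in> reg_cells Ap h" "D = (\<Inter>h. \<sigma> h)" and Dne: "D \<noteq> {}"
    unfolding common_refinement_def by blast
  have Dsub: "D \<subseteq> \<sigma> h" for h using \<sigma>(2) by blast
  have "convex (\<sigma> h)" for h
  proof -
    from \<sigma>(1) obtain w where "\<sigma> h = convex hull {a\<in>Ap. \<forall>a'\<in>Ap. h a + w \<bullet> a \<le> h a' + w \<bullet> a'}"
      unfolding reg_cells_def by blast
    then show ?thesis by simp
  qed
  then have cvxD: "convex D" using \<sigma>(2) by (auto intro!: convex_Inter)
  from \<sigma>(1) obtain w where w: "\<sigma> y = convex hull {a\<in>Ap. \<forall>a'\<in>Ap. y a + w \<bullet> a \<le> y a' + w \<bullet> a'}"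
    unfolding reg_cells_def by blast
  define F where "F = {a\<in>Ap. \<forall>a'\<in>Ap. y a + w \<bullet> a \<le> y a' + w \<bullet> a'}"
  have DsubF: "D \<subseteq> convex hull F" using Dsub[of y] w F_def by simp
  have affhD: "affine hull D = UNIV" using affD aff_dim_eq_full[of D] by simp
  have riD: "rel_interior D = interior D" by (rule rel_interior_interior[OF affhD])
  have intD: "interior D \<noteq> {}" using riD rel_interior_eq_empty[OF cvxD] Dne by simp
  define Bad where "Bad = \<Union>((\<lambda>T. convex hull T) ` {T. T \<subseteq> Ap \<and> aff_dim T < int ?n})"
  have "interior Bad = {}"
    unfolding Bad_def
  proof (rule interior_Union_empty)
    show "finite ((\<lambda>T. convex hull T) ` {T. T \<subseteq> Ap \<and> aff_dim T < int ?n})"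
      using finAp by (auto intro: finite_subset[of _ "Pow Ap"])
    show "\<forall>S\<in>(\<lambda>T. convex hull T) ` {T. T \<subseteq> Ap \<and> aff_dim T < int ?n}. closed S \<and> interior S = {}"
    proof
      fix S assume "S \<in> (\<lambda>T. convex hull T) ` {T. T \<subseteq> Ap \<and> aff_dim T < int ?n}"
      then obtain T where T: "T \<subseteq> Ap" "aff_dim T < int ?n" and S: "S = convex hull T" by blast
      then have "finite T" using finAp finite_subset by blast
      then have "closed S" unfolding S by (simp add: compact_imp_closed finite_imp_compact_convex_hull)
      moreover have "interior S = {}"
      proof (rule ccontr)
        assume "interior S \<noteq> {}"
        then have "aff_dim (convex hull T) = int ?n" unfolding S using aff_dim_nonempty_interior by fastforce
        then show False using T(2) by (simp add: aff_dim_convex_hull)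
      qed
      ultimately show "closed S \<and> interior S = {}" by simp
    qed
  qed
  then obtain z where z: "z \<in> interior D" "z \<notin> Bad"
  proof -
    assume r: "\<And>z. z \<in> interior D \<Longrightarrow> z \<notin> Bad \<Longrightarrow> thesis"
    show thesis
    proof (rule ccontr)
      assume "\<not> thesis"
      then have "interior D \<subseteq> Bad" using r by blast
      then have "interior D \<subseteq> interior Bad" by (simp add: interior_maximal)
      then show False using intD \<open>interior Bad = {}\<close> by simp
    qed
  qed
  have zD: "z \<in> D" using z(1) interior_subset by blast
  then have "z \<in> convex hull F" using DsubF by blast
  then obtain S u where Su: "finite S" "S \<subseteq> F" "card S \<le> aff_dim F + 1" "\<forall>x\<in>S. 0 \<le> u x"
      "sum u S = 1" "(\<Sum>v\<in>S. u v *\<^sub>R v) = z"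
    unfolding convex_hull_caratheodory_aff_dim by blast
  have SAp: "S \<subseteq> Ap" using Su(2) F_def by auto
  have "aff_dim F \<le> int ?n" using aff_dim_le_DIM[of F] by simp
  then have cardS: "int (card S) \<le> int ?n + 1" using Su(3) by simp
  have zS: "z \<in> convex hull S" using Su convex_hull_finite[OF Su(1)] by blast
  have "\<not> aff_dim S < int ?n"
  proof
    assume "aff_dim S < int ?n"
    then have "z \<in> Bad" unfolding Bad_def using SAp zS by blast
    then show False using z by simp
  qed
  moreover have "aff_dim S \<le> int (card S) - 1" using aff_dim_le_card[OF Su(1)] by simp
  ultimately have cardS': "card S = ?n + 1" and affS: "aff_dim S = int ?n"
    using cardS by linarith+
  have indS: "\<not> affine_dependent S"
    using affine_independent_iff_card[of S] Su(1) affS cardS' by simp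
  have affhS: "affine hull S = UNIV" using affS aff_dim_eq_full[of S] by simp
  have upos: "\<forall>v\<in>S. 0 < u v"
  proof (rule ccontr)
    assume "\<not> (\<forall>v\<in>S. 0 < u v)"
    then obtain v where v: "v \<in> S" "u v = 0" using Su(4) by force
    have fin': "finite (S - {v})" using Su(1) by simp
    have "sum u (S - {v}) = 1" using Su(5) v Su(1) by (simp add: sum_diff1)
    moreover have "(\<Sum>x\<in>S - {v}. u x *\<^sub>R x) = z" using Su(6) v Su(1) by (simp add: sum_diff1)
    ultimately have "z \<in> convex hull (S - {v})"
      using convex_hull_finite[OF fin'] Su(4) by auto
    moreover have "aff_dim (S - {v}) < int ?n"
    proof -
      have "aff_dim (S - {v}) \<le> int (card (S - {v})) - 1" using aff_dim_le_card[OF fin'] by simp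
      also have "card (S - {v}) = ?n" using cardS' v Su(1) by simp
      finally show ?thesis by simp
    qed
    ultimately have "z \<in> Bad" unfolding Bad_def using SAp by blast
    then show False using z by simp
  qed
  have Sne: "S \<noteq> {}" using cardS' by auto
  \<comment> \<open>the simplex S contains D\<close>
  define hV where "hV = (\<lambda>a. if a \<in> S then 0 else (1::real))"
  from \<sigma>(1) obtain w' where w': "\<sigma> hV = convex hull {a\<in>Ap. \<forall>a'\<in>Ap. hV a + w' \<bullet> a \<le> hV a' + w' \<bullet> a'}"
    unfolding reg_cells_def by blast
  define F' where "F' = {a\<in>Ap. \<forall>a'\<in>Ap. hV a + w' \<bullet> a \<le> hV a' + w' \<bullet> a'}"
  have DF': "D \<subseteq> convex hull F'" using Dsub[of hV] w' F'_def by simp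
  have finF': "finite F'" using finAp F'_def by simp
  from zD DF' obtain \<mu> where \<mu>: "\<forall>x\<in>F'. 0 \<le> \<mu> x" "sum \<mu> F' = 1" "(\<Sum>x\<in>F'. \<mu> x *\<^sub>R x) = z"
    using convex_hull_finite[OF finF'] by blast
  have "F' \<noteq> {}" using \<mu>(2) by auto
  then obtain a0 where a0: "a0 \<in> F'" by blast
  define m where "m = hV a0 + w' \<bullet> a0"
  have mF': "\<forall>a\<in>F'. hV a + w' \<bullet> a = m"
    using a0 unfolding m_def F'_def by (auto intro: order_antisym)
  have mAp: "\<forall>a\<in>Ap. hV a + w' \<bullet> a \<ge> m"
    using a0 unfolding m_def F'_def by auto
  have "w' \<bullet> z = (\<Sum>x\<in>F'. \<mu> x * (w' \<bullet> x))" using \<mu>(3) by (auto simp: inner_sum_right)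
  also have "\<dots> = (\<Sum>x\<in>F'. \<mu> x * (m - hV x))" using mF' by (intro sum.cong) (auto simp: algebra_simps)
  also have "\<dots> = m * (\<Sum>x\<in>F'. \<mu> x) - (\<Sum>x\<in>F'. \<mu> x * hV x)"
    by (simp add: right_diff_distrib sum_subtractf sum_distrib_left mult.commute)
  also have "\<dots> = m - (\<Sum>x\<in>F'. \<mu> x * hV x)" using \<mu>(2) by simp
  also have "\<dots> \<le> m" using \<mu>(1) by (auto intro!: sum_nonneg simp: hV_def)
  finally have wz: "w' \<bullet> z \<le> m" .
  have "w' \<bullet> z - m = (\<Sum>v\<in>S. u v * (w' \<bullet> v - m))"
  proof -
    have "(\<Sum>v\<in>S. u v * (w' \<bullet> v - m)) = (\<Sum>v\<in>S. u v * (w' \<bullet> v)) - m * (\<Sum>v\<in>S. u v)"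
      by (simp add: right_diff_distrib sum_subtractf sum_distrib_left mult.commute)
    also have "(\<Sum>v\<in>S. u v * (w' \<bullet> v)) = w' \<bullet> z" unfolding Su(6)[symmetric] by (simp add: inner_sum_right)
    finally show ?thesis using Su(5) by simp
  qed
  then have s0: "(\<Sum>v\<in>S. u v * (w' \<bullet> v - m)) \<le> 0" using wz by simp
  have tnn: "\<forall>v\<in>S. 0 \<le> u v * (w' \<bullet> v - m)"
  proof
    fix v assume v: "v \<in> S"
    then have "m \<le> hV v + w' \<bullet> v" using mAp SAp by blast
    then have "m \<le> w' \<bullet> v" using v unfolding hV_def by simp
    then show "0 \<le> u v * (w' \<bullet> v - m)" using Su(4) v by simp
  qed
  then have "0 \<le> (\<Sum>v\<in>S. u v * (w' \<bullet> v - m))" by (intro sum_nonneg) blast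
  then have "(\<Sum>v\<in>S. u v * (w' \<bullet> v - m)) = 0" using s0 by linarith
  then have z0: "\<forall>v\<in>S. u v * (w' \<bullet> v - m) = 0" using tnn by (simp add: sum_nonneg_eq_0_iff[OF Su(1)])
  have wv: "\<forall>v\<in>S. w' \<bullet> v = m"
  proof
    fix v assume "v \<in> S"
    then have "u v * (w' \<bullet> v - m) = 0" "u v > 0" using z0 upos by auto
    then show "w' \<bullet> v = m" by simp
  qed
  have "affine hull S \<subseteq> {q. w' \<bullet> q = m}"
    by (rule hull_minimal) (use wv affine_hyperplane in blast)+
  then have allq: "\<And>q. w' \<bullet> q = m" using affhS by blast
  have "m = 0" using allq[of 0] by simp
  then have "w' \<bullet> w' = 0" using allq[of w'] by simp
  then have w'0: "w' = 0" by simp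
  have "F' \<subseteq> S"
  proof
    fix a assume a: "a \<in> F'"
    obtain v where "v \<in> S" using Sne by blast
    have "hV a + w' \<bullet> a \<le> hV v + w' \<bullet> v" using a \<open>v \<in> S\<close> SAp unfolding F'_def by blast
    then have "hV a \<le> 0" using \<open>v \<in> S\<close> unfolding w'0 hV_def by simp
    then show "a \<in> S" unfolding hV_def by (simp split: if_splits)
  qed
  then have DS: "D \<subseteq> convex hull S" using DF' hull_mono by blast
  have "rel_interior D \<subseteq> rel_interior (convex hull S)"
    using interior_mono[OF DS] riD rel_interior_interior[of "convex hull S"] affhS
    by (simp add: affine_hull_convex_hull)
  then have SL: "S \<in> Lambda Ap D" unfolding Lambda_def using SAp cardS' indS by simp
  obtain v0 where v0: "v0 \<in> S" using Sne by blast
  have "\<forall>v\<in>S. y v + w \<bullet> v = y v0 + w \<bullet> v0"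
    using v0 Su(2) unfolding F_def by (auto intro: order_antisym)
  moreover have "\<forall>a\<in>Ap. y a + w \<bullet> a \<ge> y v0 + w \<bullet> v0" using v0 Su(2) unfolding F_def by auto
  ultimately show ?thesis using SL by blast
qed


theorem lemma3p13:
  fixes Ap Am D :: "(real^'n) set" and c :: "real^'n \<Rightarrow> real"
  assumes "finite Ap" and "finite Am" and "Ap \<inter> Am = {}"
    and "aff_dim (convex hull (Ap \<union> Am)) = int CARD('n)"
    and "nonseparable Ap Am"
    and "D \<in> F_n Ap" and "Am \<subseteq> D"
    and "\<forall>a\<in>Ap \<union> Am. c a > 0"
    and "(1::real^'n) \<in> Sing_pos (signomial Ap Am c)"
  shows "Zset Ap Am (Lambda Ap D) c \<inter> {\<delta>. \<forall>V\<in>Lambda Ap D. \<delta> V \<ge> 0} \<noteq> {}"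
proof -
  note finAp = assms(1) and DF = assms(6)
  define L where "L = Lambda Ap D"
  define M where "M = (\<Sum>b\<in>Am. c b)"
  define P where "P = (\<Sum>b\<in>Am. c b *\<^sub>R b)"
  have cM: "(\<Sum>a\<in>Ap. c a) = M" using sing_facts(1)[OF assms(9)] M_def by simp
  have cP: "(\<Sum>a\<in>Ap. c a *\<^sub>R a) = P" using sing_facts(2)[OF assms(9)] P_def by simp
  have cnn: "\<And>a. a \<in> Ap \<Longrightarrow> 0 \<le> c a" using assms(8) by (simp add: less_imp_le)
  have finL: "finite L" unfolding L_def Lambda_def
    by (rule finite_subset[of _ "Pow Ap"]) (use finAp in auto)
  have Lprops: "finite V \<and> \<not> affine_dependent V \<and> affine hull V = UNIV \<and> V \<subseteq> Ap" if "V \<in> L" for V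
  proof -
    have V: "V \<subseteq> Ap" "card V = CARD('n) + 1" "\<not> affine_dependent V"
      using that unfolding L_def Lambda_def by auto
    have "finite V" by (rule ccontr) (use V(2) in simp)
    then have "aff_dim V = int CARD('n)" using V affine_independent_iff_card[of V] by simp
    then have "affine hull V = UNIV" using aff_dim_eq_full[of V] by simp
    then show ?thesis using V \<open>finite V\<close> by simp
  qed
  define mu where "mu V a = (\<Sum>b\<in>Am. bary V b a * c b)" for V a
  have mu0: "mu V a = 0" if "V \<in> L" "a \<notin> V" for V a
    using bary_char[of V] Lprops[OF that(1)] that(2) unfolding mu_def by simp
  have muM: "(\<Sum>a\<in>V. mu V a) = M" if "V \<in> L" for V
  proof -
    have "(\<Sum>a\<in>V. mu V a) = (\<Sum>b\<in>Am. (\<Sum>a\<in>V. bary V b a) * c b)"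
      unfolding mu_def by (simp add: sum.swap[of _ V] sum_distrib_right)
    also have "\<dots> = M" unfolding M_def using bary_char[of V] Lprops[OF that] by simp
    finally show ?thesis .
  qed
  have muP: "(\<Sum>a\<in>V. mu V a *\<^sub>R a) = P" if "V \<in> L" for V
  proof -
    have "(\<Sum>a\<in>V. mu V a *\<^sub>R a) = (\<Sum>a\<in>V. \<Sum>b\<in>Am. c b *\<^sub>R (bary V b a *\<^sub>R a))"
      unfolding mu_def by (simp add: scaleR_sum_left mult.commute)
    also have "\<dots> = (\<Sum>b\<in>Am. c b *\<^sub>R (\<Sum>a\<in>V. bary V b a *\<^sub>R a))"
      by (simp add: sum.swap[of _ V] scaleR_sum_right)
    also have "\<dots> = P" unfolding P_def using bary_char[of V] Lprops[OF that] by simp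
    finally show ?thesis .
  qed
  have cone: "\<exists>l. (\<forall>V\<in>L. l V \<ge> 0) \<and> (\<forall>a\<in>Ap. c a = (\<Sum>V\<in>L. l V * mu V a))"
  proof (rule ccontr)
    assume nc: "\<not> (\<exists>l. (\<forall>V\<in>L. l V \<ge> 0) \<and> (\<forall>a\<in>Ap. c a = (\<Sum>V\<in>L. l V * mu V a)))"
    obtain y where y: "\<forall>V\<in>L. dotA Ap y (mu V) \<ge> 0" "dotA Ap y c < 0"
      using farkas_aux[OF finAp finL nc] by blast
    obtain V w m where V: "V \<in> L" "\<forall>v\<in>V. y v + w \<bullet> v = m" "\<forall>a\<in>Ap. y a + w \<bullet> a \<ge> m"
      using geo[OF finAp DF, of y] unfolding L_def by blast
    have VAp: "V \<subseteq> Ap" using Lprops[OF V(1)] by simp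
    have "dotA Ap y (mu V) = (\<Sum>a\<in>V. y a * mu V a)"
      unfolding dotA_def
      by (rule sum.mono_neutral_right[OF finAp VAp]) (use mu0[OF V(1)] in auto)
    also have "\<dots> = (\<Sum>a\<in>V. (m - w \<bullet> a) * mu V a)"
      by (rule sum.cong) (use V(2) in \<open>auto simp: algebra_simps\<close>)
    also have "\<dots> = (\<Sum>a\<in>V. m * mu V a - mu V a * (w \<bullet> a))"
      by (rule sum.cong) (simp_all add: algebra_simps)
    also have "\<dots> = m * (\<Sum>a\<in>V. mu V a) - (\<Sum>a\<in>V. mu V a * (w \<bullet> a))"
      by (simp add: sum_subtractf sum_distrib_left)
    also have "(\<Sum>a\<in>V. mu V a * (w \<bullet> a)) = w \<bullet> P"
      unfolding muP[OF V(1), symmetric] by (simp add: inner_sum_right)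
    finally have e1: "dotA Ap y (mu V) = m * M - w \<bullet> P" using muM[OF V(1)] by simp
    have "(\<Sum>a\<in>Ap. (m - w \<bullet> a) * c a) \<le> (\<Sum>a\<in>Ap. y a * c a)"
    proof (rule sum_mono)
      fix a assume "a \<in> Ap"
      then show "(m - w \<bullet> a) * c a \<le> y a * c a"
        using V(3) cnn[of a] by (intro mult_right_mono) auto
    qed
    also have "(\<Sum>a\<in>Ap. (m - w \<bullet> a) * c a) = (\<Sum>a\<in>Ap. m * c a - c a * (w \<bullet> a))"
      by (rule sum.cong) (simp_all add: algebra_simps)
    also have "\<dots> = m * (\<Sum>a\<in>Ap. c a) - (\<Sum>a\<in>Ap. c a * (w \<bullet> a))"
      by (simp add: sum_subtractf sum_distrib_left)
    also have "(\<Sum>a\<in>Ap. c a * (w \<bullet> a)) = w \<bullet> P"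
      unfolding cP[symmetric] by (simp add: inner_sum_right)
    finally have e2: "m * M - w \<bullet> P \<le> dotA Ap y c" unfolding dotA_def cM .
    show False using y V(1) e1 e2 by fastforce
  qed
  then obtain l where l: "\<forall>V\<in>L. l V \<ge> 0" "\<forall>a\<in>Ap. c a = (\<Sum>V\<in>L. l V * mu V a)" by blast
  define \<delta> where "\<delta> V = (if V \<in> L then l V else 0)" for V
  have "\<delta> \<in> Zset Ap Am L c"
    unfolding Zset_def
  proof (intro CollectI conjI allI impI ballI)
    fix V assume "V \<notin> L" then show "\<delta> V = 0" unfolding \<delta>_def by simp
  next
    fix a assume a: "a \<in> Ap"
    have "(\<Sum>V\<in>{V\<in>L. a \<in> V}. \<delta> V * (\<Sum>b\<in>Am. bary V b a * c b)) = (\<Sum>V\<in>L. \<delta> V * mu V a)"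
      unfolding mu_def[symmetric]
      by (rule sum.mono_neutral_left[OF finL]) (use mu0 in auto)
    also have "\<dots> = (\<Sum>V\<in>L. l V * mu V a)" by (rule sum.cong) (auto simp: \<delta>_def)
    finally show "c a = (\<Sum>V\<in>{V\<in>L. a \<in> V}. \<delta> V * (\<Sum>b\<in>Am. bary V b a * c b))"
      using l(2) a by simp
  qed
  moreover have "\<delta> \<in> {\<delta>. \<forall>V\<in>L. \<delta> V \<ge> 0}" using l(1) unfolding \<delta>_def by simp
  ultimately show ?thesis unfolding L_def by blast
qed

end
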